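(* Let $\Phi$ be a countable set of contexts and $\Xi$ a countable set of human trajectories. Let $P(\phi)$ be a probability distribution on $\Phi$, and for each $\phi\in\Phi$ let $P(\cdot\mid\phi)$ (ground truth) and $P_\theta(\cdot\mid\phi)$ (learned model) be probability distributions on $\Xi$. Fix a robot trajectory $\xi_R$ and a bounded real-valued cost $C(\xi_R\mid\xi_H,\phi)$, $\xi_H\in\Xi$, $\phi\in\Phi$. Define $$\ell(\theta)=\sum_{\phi}P(\phi)\left|\sum_{\xi_H}C(\xi_R\mid\xi_H,\phi)P(\xi_H\mid\phi)-\sum_{\xi_H}C(\xi_R\mid\xi_H,\phi)P_\theta(\xi_H\mid\phi)\right|,$$ $C_{\max}(\phi)=\sup_{\xi_H\in\Xi}|C(\xi_R\mid\xi_H,\phi)|$, and $C_{\max}=\sup_{\phi}C_{\max}(\phi)$. For a threshold $\delta>0$ with $p_\delta:=\mathbb{E}_{P(\phi)}[\mathbb{I}(C_{\max}(\phi)\ge\delta)]>0$, define the transition distribution $P_T(\phi)=P(\phi)\mathbb{I}(C_{\max}(\phi)\ge\delta)/p_\delta$ and $Q(\phi)=\tfrac12P(\phi)+\tfrac12P_T(\phi)$. Then: (i) if $\sum_\phi P(\phi)\sum_{\xi_H}|P(\xi_H\mid\phi)-P_\theta(\xi_H\mid\phi)|\le\epsilon$, then $\ell(\theta)\le C_{\max}\,\epsilon$; (ii) if $\sum_\phi Q(\phi)\sum_{\xi_H}|P(\xi_H\mid\phi)-P_\theta(\xi_H\mid\phi)|\le\epsilon$, then $\ell(\theta)\le 2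\max\big(\delta,\;C_{\max}\,\mathbb{E}_{P(\phi)}[\mathbb{I}(C_{\max}(\phi)\ge\delta)]\big)\,\epsilon$.
   Context: "Bounded loss of $\epsilon$" of a model on a distribution over contexts means that the expected (over that context distribution) $L^1$ distance between the ground-truth conditional distribution of future human trajectories and the model's conditional distribution is at most $\epsilon$. $\mathbb{I}$ denotes the indicator function. $\ell(\theta)$ measures, in expectation over contexts drawn from $P(\phi)$, the absolute difference between the expected cost of the fixed robot plan $\xi_R$ under the true human-trajectory distribution and under the model's distribution. *)

theory Defs
  imports "HOL-Probability.Probability"
begin

text \<open>Countable context type 'c (Phi), countable human-trajectory type 'h (Xi),
  robot trajectory type 'r. Distributions are pmfs; sums over countable sets are infsums.\<close>

definition loss :: "'c pmf \<Rightarrow> ('c \<Rightarrow> 'h pmf) \<Rightarrow> ('c \<Rightarrow> 'h pmf) \<Rightarrow>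
    ('r \<Rightarrow> 'h \<Rightarrow> 'c \<Rightarrow> real) \<Rightarrow> 'r \<Rightarrow> real" where
  "loss P Pgt Pth C xiR =
     (\<Sum>\<^sub>\<infinity>\<phi>. pmf P \<phi> *
        \<bar>(\<Sum>\<^sub>\<infinity>\<xi>. C xiR \<xi> \<phi> * pmf (Pgt \<phi>) \<xi>) - (\<Sum>\<^sub>\<infinity>\<xi>. C xiR \<xi> \<phi> * pmf (Pth \<phi>) \<xi>)\<bar>)"

definition Cmax_ctx :: "('r \<Rightarrow> 'h \<Rightarrow> 'c \<Rightarrow> real) \<Rightarrow> 'r \<Rightarrow> 'c \<Rightarrow> real" where
  "Cmax_ctx C xiR \<phi> = (SUP \<xi>. \<bar>C xiR \<xi> \<phi>\<bar>)"

definition Cmax :: "('r \<Rightarrow> 'h \<Rightarrow> 'c \<Rightarrow> real) \<Rightarrow> 'r \<Rightarrow> real" where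
  "Cmax C xiR = (SUP \<phi>. Cmax_ctx C xiR \<phi>)"

definition p_delta :: "'c pmf \<Rightarrow> ('r \<Rightarrow> 'h \<Rightarrow> 'c \<Rightarrow> real) \<Rightarrow> 'r \<Rightarrow> real \<Rightarrow> real" where
  "p_delta P C xiR \<delta> =
     (\<Sum>\<^sub>\<infinity>\<phi>. pmf P \<phi> * (if Cmax_ctx C xiR \<phi> \<ge> \<delta> then 1 else 0))"

definition P_T :: "'c pmf \<Rightarrow> ('r \<Rightarrow> 'h \<Rightarrow> 'c \<Rightarrow> real) \<Rightarrow> 'r \<Rightarrow> real \<Rightarrow> 'c \<Rightarrow> real" where
  "P_T P C xiR \<delta> \<phi> =
     pmf P \<phi> * (if Cmax_ctx C xiR \<phi> \<ge> \<delta> then 1 else 0) / p_delta P C xiR \<delta>"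

definition Qmix :: "'c pmf \<Rightarrow> ('r \<Rightarrow> 'h \<Rightarrow> 'c \<Rightarrow> real) \<Rightarrow> 'r \<Rightarrow> real \<Rightarrow> 'c \<Rightarrow> real" where
  "Qmix P C xiR \<delta> \<phi> = 1/2 * pmf P \<phi> + 1/2 * P_T P C xiR \<delta> \<phi>"

definition exp_L1 :: "('c \<Rightarrow> real) \<Rightarrow> ('c \<Rightarrow> 'h pmf) \<Rightarrow> ('c \<Rightarrow> 'h pmf) \<Rightarrow> real" where
  "exp_L1 w Pgt Pth =
     (\<Sum>\<^sub>\<infinity>\<phi>. w \<phi> * (\<Sum>\<^sub>\<infinity>\<xi>. \<bar>pmf (Pgt \<phi>) \<xi> - pmf (Pth \<phi>) \<xi>\<bar>))"

end

theory Submission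
  imports Defs
begin

lemma pmf_summ: "pmf p summable_on A"
  by (meson abs_summable_equivalent pmf_abs_summable abs_summable_summable)

lemma pmf_infsum1: "infsum (pmf p) UNIV = 1"
  using infsetsum_infsum[OF pmf_abs_summable[of p UNIV]] infsetsum_pmf_eq_1[of p UNIV] by simp

lemma dom_summ:
  fixes f g :: "'a \<Rightarrow> real"
  assumes "g summable_on A" "\<And>x. x \<in> A \<Longrightarrow> \<bar>f x\<bar> \<le> g x"
  shows "f summable_on A"
proof -
  have "(\<lambda>x. \<bar>f x\<bar>) summable_on A"
    by (rule summable_on_comparison_test[OF assms(1)]) (use assms(2) in auto)
  then show ?thesis
    unfolding summable_on_iff_abs_summable_on_real[of f A] real_norm_def .
qed

lemma d_props:
  fixes p q :: "'h pmf"
  shows "(\<lambda>\<xi>. \<bar>pmf p \<xi> - pmf q \<xi>\<bar>) summable_on UNIV"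
    and "0 \<le> (\<Sum>\<^sub>\<infinity>\<xi>. \<bar>pmf p \<xi> - pmf q \<xi>\<bar>)"
    and "(\<Sum>\<^sub>\<infinity>\<xi>. \<bar>pmf p \<xi> - pmf q \<xi>\<bar>) \<le> 2"
proof -
  have ab: "\<bar>pmf p x - pmf q x\<bar> \<le> pmf p x + pmf q x" for x
    unfolding abs_le_iff using pmf_nonneg[of p x] pmf_nonneg[of q x] by linarith
  have s: "(\<lambda>\<xi>. pmf p \<xi> + pmf q \<xi>) summable_on UNIV"
    by (intro summable_on_add pmf_summ)
  show s2: "(\<lambda>\<xi>. \<bar>pmf p \<xi> - pmf q \<xi>\<bar>) summable_on UNIV"
    by (rule dom_summ[OF s]) (simp add: ab)
  show "0 \<le> (\<Sum>\<^sub>\<infinity>\<xi>. \<bar>pmf p \<xi> - pmf q \<xi>\<bar>)"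
    by (rule infsum_nonneg) simp
  have "(\<Sum>\<^sub>\<infinity>\<xi>. \<bar>pmf p \<xi> - pmf q \<xi>\<bar>) \<le> (\<Sum>\<^sub>\<infinity>\<xi>. pmf p \<xi> + pmf q \<xi>)"
    by (rule infsum_mono[OF s2 s], rule ab)
  also have "\<dots> = 2"
    using infsum_add[OF pmf_summ[of p UNIV] pmf_summ[of q UNIV]] pmf_infsum1[of p] pmf_infsum1[of q] by linarith
  finally show "(\<Sum>\<^sub>\<infinity>\<xi>. \<bar>pmf p \<xi> - pmf q \<xi>\<bar>) \<le> 2" .
qed

lemma ctx_bound:
  fixes p q :: "'h pmf" and f :: "'h \<Rightarrow> real"
  assumes "\<And>\<xi>. \<bar>f \<xi>\<bar> \<le> c"
  shows "\<bar>(\<Sum>\<^sub>\<infinity>\<xi>. f \<xi> * pmf p \<xi>) - (\<Sum>\<^sub>\<infinity>\<xi>. f \<xi> * pmf q \<xi>)\<bar>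
          \<le> c * (\<Sum>\<^sub>\<infinity>\<xi>. \<bar>pmf p \<xi> - pmf q \<xi>\<bar>)"
proof -
  have sp: "(\<lambda>\<xi>. f \<xi> * pmf p \<xi>) summable_on UNIV" for p
    by (rule dom_summ[OF summable_on_cmult_right[OF pmf_summ[of p], of c]])
       (simp add: abs_mult mult_right_mono[OF assms pmf_nonneg])
  have sm: "(\<lambda>\<xi>. - (f \<xi> * pmf q \<xi>)) summable_on UNIV"
    using sp[of q] by (simp add: summable_on_uminus)
  have "(\<Sum>\<^sub>\<infinity>\<xi>. f \<xi> * pmf p \<xi>) - (\<Sum>\<^sub>\<infinity>\<xi>. f \<xi> * pmf q \<xi>)
      = (\<Sum>\<^sub>\<infinity>\<xi>. f \<xi> * pmf p \<xi> - f \<xi> * pmf q \<xi>)"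
    using infsum_add[OF sp sm] infsum_uminus[of "\<lambda>\<xi>. f \<xi> * pmf q \<xi>" UNIV] by simp
  moreover have sd: "(\<lambda>\<xi>. f \<xi> * pmf p \<xi> - f \<xi> * pmf q \<xi>) summable_on UNIV"
    using summable_on_add[OF sp sm] by simp
  moreover have sc: "(\<lambda>\<xi>. c * \<bar>pmf p \<xi> - pmf q \<xi>\<bar>) summable_on UNIV"
    by (intro summable_on_cmult_right d_props)
  have "norm (\<Sum>\<^sub>\<infinity>\<xi>. f \<xi> * pmf p \<xi> - f \<xi> * pmf q \<xi>) \<le> (\<Sum>\<^sub>\<infinity>\<xi>. c * \<bar>pmf p \<xi> - pmf q \<xi>\<bar>)"
  proof (rule norm_infsum_le[OF has_sum_infsum[OF sd] has_sum_infsum[OF sc]])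
    fix x
    have "\<bar>f x * pmf p x - f x * pmf q x\<bar> = \<bar>f x\<bar> * \<bar>pmf p x - pmf q x\<bar>"
      by (simp add: abs_mult right_diff_distrib[symmetric])
    also have "\<dots> \<le> c * \<bar>pmf p x - pmf q x\<bar>"
      by (rule mult_right_mono[OF assms]) auto
    finally show "norm (f x * pmf p x - f x * pmf q x) \<le> c * \<bar>pmf p x - pmf q x\<bar>" by simp
  qed
  ultimately show ?thesis
    by (simp add: infsum_cmult_right')
qed


lemma pw2:
  fixes P c d Q M pd \<delta> Cm :: real
  assumes P0: "0 \<le> P" and c0: "0 \<le> c" and d0: "0 \<le> d" and cM: "c \<le> Cm" and pd: "pd > 0"
    and dp: "\<delta> > 0"
    and Q: "Q = 1/2 * P + 1/2 * (P * (if c \<ge> \<delta> then 1 else 0) / pd)"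
  shows "P * c * d \<le> 2 * max \<delta> (Cm * pd) * (Q * d)"
proof (cases "c \<ge> \<delta>")
  case True
  have Cm0: "0 \<le> Cm" using c0 cM by linarith
  have Q0: "0 \<le> Q" using Q P0 pd by simp
  have Qe: "2 * Q * pd = P * pd + P" using True Q pd by (simp add: field_simps)
  have "P * c * d \<le> P * Cm * d" using P0 d0 cM by (simp add: mult_left_mono mult_right_mono)
  also have "\<dots> \<le> Cm * (P * pd + P) * d"
    using P0 d0 Cm0 pd by (simp add: algebra_simps mult_nonneg_nonneg)
  also have "\<dots> = (Cm * pd) * (2 * Q) * d" using Qe pd by (simp add: field_simps)
  also have "\<dots> \<le> max \<delta> (Cm * pd) * (2 * Q) * d"
    using Q0 d0 by (intro mult_right_mono) auto
  finally show ?thesis by (simp add: algebra_simps)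
next
  case False
  have Qe: "2 * Q = P" using False Q by simp
  have "P * c * d \<le> P * \<delta> * d" using P0 d0 False by (simp add: mult_left_mono mult_right_mono)
  also have "\<dots> \<le> P * max \<delta> (Cm * pd) * d" using P0 d0 by (simp add: mult_left_mono mult_right_mono)
  also have "\<dots> = 2 * max \<delta> (Cm * pd) * (Q * d)" using Qe by (simp add: algebra_simps)
  finally show ?thesis .
qed

theorem lemma1:
  fixes P :: "'c::countable pmf"
    and Pgt Pth :: "'c \<Rightarrow> 'h::countable pmf"
    and C :: "'r \<Rightarrow> 'h \<Rightarrow> 'c \<Rightarrow> real"
    and xiR :: 'r
    and \<delta> \<epsilon> :: real
  assumes bounded: "\<exists>B. \<forall>\<xi> \<phi>. \<bar>C xiR \<xi> \<phi>\<bar> \<le> B"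
    and delta_pos: "\<delta> > 0"
    and pdelta_pos: "p_delta P C xiR \<delta> > 0"
  shows "(exp_L1 (pmf P) Pgt Pth \<le> \<epsilon> \<longrightarrow> loss P Pgt Pth C xiR \<le> Cmax C xiR * \<epsilon>)
       \<and> (exp_L1 (Qmix P C xiR \<delta>) Pgt Pth \<le> \<epsilon> \<longrightarrow>
            loss P Pgt Pth C xiR \<le> 2 * max \<delta> (Cmax C xiR * p_delta P C xiR \<delta>) * \<epsilon>)"
proof -
  obtain B where B: "\<And>\<xi> \<phi>. \<bar>C xiR \<xi> \<phi>\<bar> \<le> B" using bounded by blast
  define c where "c = Cmax_ctx C xiR"
  have bddx: "bdd_above (range (\<lambda>\<xi>. \<bar>C xiR \<xi> \<phi>\<bar>))" for \<phi>
    by (rule bdd_aboveI[where M=B]) (use B in auto)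
  have cC: "\<bar>C xiR \<xi> \<phi>\<bar> \<le> c \<phi>" for \<xi> \<phi>
    unfolding c_def Cmax_ctx_def by (rule cSUP_upper[OF UNIV_I bddx])
  have cB: "c \<phi> \<le> B" for \<phi>
    unfolding c_def Cmax_ctx_def by (rule cSUP_least) (auto simp: B)
  have c0: "0 \<le> c \<phi>" for \<phi>
    using cC[of undefined \<phi>] by linarith
  have B0: "0 \<le> B" using c0 cB by (meson order_trans)
  have bddc: "bdd_above (range c)" by (rule bdd_aboveI[where M=B]) (use cB in auto)
  have cM: "c \<phi> \<le> Cmax C xiR" for \<phi>
    unfolding Cmax_def c_def[symmetric] by (rule cSUP_upper[OF UNIV_I bddc])
  have M0: "0 \<le> Cmax C xiR" using c0 cM by (meson order_trans)
  define d where "d \<phi> = (\<Sum>\<^sub>\<infinity>\<xi>. \<bar>pmf (Pgt \<phi>) \<xi> - pmf (Pth \<phi>) \<xi>\<bar>)" for \<phi>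
  have d0: "0 \<le> d \<phi>" and d2: "d \<phi> \<le> 2" for \<phi>
    unfolding d_def by (rule d_props)+
  define g where "g \<phi> = \<bar>(\<Sum>\<^sub>\<infinity>\<xi>. C xiR \<xi> \<phi> * pmf (Pgt \<phi>) \<xi>) - (\<Sum>\<^sub>\<infinity>\<xi>. C xiR \<xi> \<phi> * pmf (Pth \<phi>) \<xi>)\<bar>" for \<phi>
  have gle: "g \<phi> \<le> c \<phi> * d \<phi>" for \<phi>
    unfolding g_def d_def by (rule ctx_bound) (rule cC)
  have g0: "0 \<le> g \<phi>" for \<phi> unfolding g_def by simp
  have loss_eq: "loss P Pgt Pth C xiR = (\<Sum>\<^sub>\<infinity>\<phi>. pmf P \<phi> * g \<phi>)"
    unfolding loss_def g_def ..
  have cd: "c \<phi> * d \<phi> \<le> B * 2" for \<phi>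
    using cB d2 c0 d0 B0 by (intro mult_mono) auto
  have sPcd: "(\<lambda>\<phi>. pmf P \<phi> * (c \<phi> * d \<phi>)) summable_on UNIV"
  proof (rule dom_summ[OF summable_on_cmult_right[OF pmf_summ[of P], of "B * 2"]])
    fix \<phi>
    have "pmf P \<phi> * (c \<phi> * d \<phi>) \<le> pmf P \<phi> * (B * 2)"
      by (rule mult_left_mono[OF cd pmf_nonneg])
    then show "\<bar>pmf P \<phi> * (c \<phi> * d \<phi>)\<bar> \<le> B * 2 * pmf P \<phi>"
      using c0 d0 by (simp add: abs_mult algebra_simps)
  qed
  have sPg: "(\<lambda>\<phi>. pmf P \<phi> * g \<phi>) summable_on UNIV"
    by (rule dom_summ[OF sPcd]) (use g0 gle in \<open>auto simp: abs_mult intro: mult_left_mono\<close>)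
  have L: "loss P Pgt Pth C xiR \<le> (\<Sum>\<^sub>\<infinity>\<phi>. pmf P \<phi> * (c \<phi> * d \<phi>))"
    unfolding loss_eq by (rule infsum_mono[OF sPg sPcd]) (use gle in \<open>auto intro: mult_left_mono\<close>)
  have sPd: "(\<lambda>\<phi>. pmf P \<phi> * d \<phi>) summable_on UNIV"
    by (rule dom_summ[OF summable_on_cmult_right[OF pmf_summ[of P], of 2]])
       (use d0 d2 in \<open>simp add: abs_mult, metis mult.commute mult_left_mono pmf_nonneg\<close>)
  have part1: "loss P Pgt Pth C xiR \<le> Cmax C xiR * \<epsilon>" if h: "exp_L1 (pmf P) Pgt Pth \<le> \<epsilon>"
  proof -
    have "(\<Sum>\<^sub>\<infinity>\<phi>. pmf P \<phi> * (c \<phi> * d \<phi>)) \<le> (\<Sum>\<^sub>\<infinity>\<phi>. Cmax C xiR * (pmf P \<phi> * d \<phi>))"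
    proof (rule infsum_mono[OF sPcd summable_on_cmult_right[OF sPd]])
      fix \<phi>
      have "pmf P \<phi> * d \<phi> * c \<phi> \<le> pmf P \<phi> * d \<phi> * Cmax C xiR"
        using d0 cM by (intro mult_left_mono) auto
      then show "pmf P \<phi> * (c \<phi> * d \<phi>) \<le> Cmax C xiR * (pmf P \<phi> * d \<phi>)"
        by (simp add: algebra_simps)
    qed
    also have "\<dots> = Cmax C xiR * exp_L1 (pmf P) Pgt Pth"
      unfolding exp_L1_def d_def[symmetric] by (rule infsum_cmult_right')
    also have "\<dots> \<le> Cmax C xiR * \<epsilon>" using h M0 by (rule mult_left_mono)
    finally show ?thesis using L by linarith
  qed
  define pd where "pd = p_delta P C xiR \<delta>"
  define Q where "Q = Qmix P C xiR \<delta>"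
  have pd0: "pd > 0" using pdelta_pos pd_def by simp
  have Qe: "Q \<phi> = 1/2 * pmf P \<phi> + 1/2 * (pmf P \<phi> * (if c \<phi> \<ge> \<delta> then 1 else 0) / pd)" for \<phi>
    unfolding Q_def Qmix_def P_T_def pd_def c_def ..
  have Q0: "0 \<le> Q \<phi>" for \<phi> using pd0 by (simp add: Qe)
  have QB: "Q \<phi> \<le> (1 + 1/pd) * pmf P \<phi>" for \<phi>
    using pd0 pmf_nonneg[of P \<phi>] by (simp add: Qe field_simps)
  have sQd: "(\<lambda>\<phi>. Q \<phi> * d \<phi>) summable_on UNIV"
  proof (rule dom_summ[OF summable_on_cmult_right[OF pmf_summ[of P], of "2 * (1 + 1/pd)"]])
    fix \<phi>
    have "Q \<phi> * d \<phi> \<le> ((1 + 1/pd) * pmf P \<phi>) * 2"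
      using QB d2 Q0 d0 pd0 by (intro mult_mono) auto
    then show "\<bar>Q \<phi> * d \<phi>\<bar> \<le> 2 * (1 + 1 / pd) * pmf P \<phi>"
      using Q0 d0 by (simp add: abs_mult algebra_simps)
  qed
  have part2: "loss P Pgt Pth C xiR \<le> 2 * max \<delta> (Cmax C xiR * pd) * \<epsilon>"
    if h: "exp_L1 Q Pgt Pth \<le> \<epsilon>"
  proof -
    have "(\<Sum>\<^sub>\<infinity>\<phi>. pmf P \<phi> * (c \<phi> * d \<phi>)) \<le> (\<Sum>\<^sub>\<infinity>\<phi>. (2 * max \<delta> (Cmax C xiR * pd)) * (Q \<phi> * d \<phi>))"
    proof (rule infsum_mono[OF sPcd summable_on_cmult_right[OF sQd]])
      fix \<phi>
      have "pmf P \<phi> * c \<phi> * d \<phi> \<le> 2 * max \<delta> (Cmax C xiR * pd) * (Q \<phi> * d \<phi>)"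
        by (rule pw2[OF pmf_nonneg c0 d0 cM pd0 delta_pos Qe])
      then show "pmf P \<phi> * (c \<phi> * d \<phi>) \<le> 2 * max \<delta> (Cmax C xiR * pd) * (Q \<phi> * d \<phi>)"
        by (simp add: algebra_simps)
    qed
    also have "\<dots> = 2 * max \<delta> (Cmax C xiR * pd) * exp_L1 Q Pgt Pth"
      unfolding exp_L1_def d_def[symmetric] by (rule infsum_cmult_right')
    also have "\<dots> \<le> 2 * max \<delta> (Cmax C xiR * pd) * \<epsilon>"
      using h delta_pos by (intro mult_left_mono) auto
    finally show ?thesis using L by linarith
  qed
  show ?thesis using part1 part2 unfolding pd_def Q_def by blast
qed

end
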